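(* Let $T\in\{0,1\}$, $X\in\mathcal{X}\subset\mathbb{R}^d$ and real-valued potential outcomes $Y_0,Y_1$ be random variables on a common probability space, and let $p_F$ be the law of $(X,T,Y_T)$ and $p_{CF}$ the law of $(X,1-T,Y_{1-T})$. Let $B\sim\mathrm{Bernoulli}(1/2)$ be independent of $(X,T,Y_0,Y_1)$, let $S=T$ if $B=1$ and $S=1-T$ if $B=0$, let $p_{IF}$ be the law of $(X,S,Y_S)$ (so $p_{IF}=\tfrac12 p_F+\tfrac12 p_{CF}$, the ideal factual distribution) and $p_{ICF}$ the law of $(X,1-S,Y_{1-S})$ (its counterfactual distribution). Then for every measurable $h:\mathcal{X}\times\{0,1\}\to\mathbb{R}$, $\mathcal{L}_{p_{IF}}(h)=\mathcal{L}_{p_{ICF}}(h)$, where for a law $p$ of a triple $(X',T',Y')$, $\mathcal{L}_p(h)=\int (y-h(x,t))^2\,p(x,t,y)\,dx\,dt\,dy=\mathbb{E}[(Y'-h(X',T'))^2]\in[0,\infty]$.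
   Context: Potential-outcomes setting: $Y_t$ is the outcome that would be observed under treatment $t$; the counterfactual distribution of a factual law of $(X,T,Y_T)$ is the law obtained by inverting the treatment assignment, i.e. of $(X,1-T,Y_{1-T})$. *)

theory Defs
  imports "HOL-Probability.Probability"
begin

definition po :: "('a \<Rightarrow> real) \<Rightarrow> ('a \<Rightarrow> real) \<Rightarrow> ('a \<Rightarrow> nat) \<Rightarrow> 'a \<Rightarrow> real" where
  "po Y0 Y1 t \<omega> = (if t \<omega> = 0 then Y0 \<omega> else Y1 \<omega>)"

definition triple_space :: "'d::euclidean_space set \<Rightarrow> ('d \<times> nat \<times> real) measure" where
  "triple_space Xs = restrict_space borel Xs \<Otimes>\<^sub>M count_space {0,1} \<Otimes>\<^sub>M (borel :: real measure)"

definition triple_law ::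
  "'a measure \<Rightarrow> 'd::euclidean_space set \<Rightarrow> ('a \<Rightarrow> 'd) \<Rightarrow> ('a \<Rightarrow> nat) \<Rightarrow> ('a \<Rightarrow> real)
     \<Rightarrow> ('d \<times> nat \<times> real) measure" where
  "triple_law M Xs X' T' Y' = distr M (triple_space Xs) (\<lambda>\<omega>. (X' \<omega>, T' \<omega>, Y' \<omega>))"

definition sq_loss :: "('d \<times> nat \<times> real) measure \<Rightarrow> ('d \<times> nat \<Rightarrow> real) \<Rightarrow> ennreal" where
  "sq_loss p h = (\<integral>\<^sup>+ z. ennreal ((snd (snd z) - h (fst z, fst (snd z)))\<^sup>2) \<partial>p)"

end

theory Submission
  imports Defs
begin

lemma key:
  fixes M :: "'a measure" and N :: "'b measure" and B :: "'a \<Rightarrow> bool" and Z :: "'a \<Rightarrow> 'b"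
    and G :: "bool \<times> 'b \<Rightarrow> ennreal"
  assumes P: "prob_space M"
    and Bm: "B \<in> M \<rightarrow>\<^sub>M count_space UNIV"
    and Zm: "Z \<in> M \<rightarrow>\<^sub>M N"
    and ind: "prob_space.indep_set M
           {B -` A \<inter> space M | A. A \<in> sets (count_space UNIV)}
           {Z -` A \<inter> space M | A. A \<in> sets N}"
    and half: "measure M {\<omega> \<in> space M. B \<omega>} = 1/2"
    and Gm: "G \<in> borel_measurable (count_space UNIV \<Otimes>\<^sub>M N)"
  shows "(\<integral>\<^sup>+ \<omega>. G (B \<omega>, Z \<omega>) \<partial>M)
     = ennreal (1/2) * (\<integral>\<^sup>+ \<omega>. G (True, Z \<omega>) \<partial>M) + ennreal (1/2) * (\<integral>\<^sup>+ \<omega>. G (False, Z \<omega>) \<partial>M)"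
proof -
  interpret prob_space M by (rule P)
  interpret PB: prob_space "distr M (count_space UNIV) B" using Bm by (rule prob_space_distr)
  interpret PZ: prob_space "distr M N Z" using Zm by (rule prob_space_distr)
  have eq: "distr M (count_space UNIV) B \<Otimes>\<^sub>M distr M N Z
       = distr M (count_space UNIV \<Otimes>\<^sub>M N) (\<lambda>x. (B x, Z x))"
  proof (rule pair_measure_eqI)
    show "sigma_finite_measure (distr M (count_space UNIV) B)" by unfold_locales
    show "sigma_finite_measure (distr M N Z)" by unfold_locales
    show "sets (distr M (count_space UNIV) B \<Otimes>\<^sub>M distr M N Z) = sets (distr M (count_space UNIV \<Otimes>\<^sub>M N) (\<lambda>x. (B x, Z x)))"
      by (simp add: sets_pair_measure_cong)
  next
    fix A C assume A: "A \<in> sets (distr M (count_space UNIV) B)" and C: "C \<in> sets (distr M N Z)"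
    have Cs: "C \<in> sets N" using C by simp
    have e1: "B -` A \<inter> space M \<in> {B -` A \<inter> space M | A. A \<in> sets (count_space UNIV)}" by auto
    have e2: "Z -` C \<inter> space M \<in> {Z -` A \<inter> space M | A. A \<in> sets N}" using Cs by auto
    have m1: "B -` A \<inter> space M \<in> sets M" using Bm by (auto intro: measurable_sets)
    have m2: "Z -` C \<inter> space M \<in> sets M" using Zm Cs by (auto intro: measurable_sets)
    have pr: "prob ((B -` A \<inter> space M) \<inter> (Z -` C \<inter> space M)) = prob (B -` A \<inter> space M) * prob (Z -` C \<inter> space M)"
      by (rule indep_setD[OF ind e1 e2])
    have "(\<lambda>x. (B x, Z x)) -` (A \<times> C) \<inter> space M = (B -` A \<inter> space M) \<inter> (Z -` C \<inter> space M)" by auto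
    moreover have "A \<times> C \<in> sets (count_space UNIV \<Otimes>\<^sub>M N)" using Cs by auto
    ultimately show "emeasure (distr M (count_space UNIV) B) A * emeasure (distr M N Z) C =
         emeasure (distr M (count_space UNIV \<Otimes>\<^sub>M N) (\<lambda>x. (B x, Z x))) (A \<times> C)"
      using Bm Zm Cs m1 m2 pr
      by (simp add: emeasure_distr emeasure_eq_measure ennreal_mult)
  qed
  interpret PP: pair_sigma_finite "distr M (count_space UNIV) B" "distr M N Z" ..
  define F where "F b = (\<integral>\<^sup>+ \<omega>. G (b, Z \<omega>) \<partial>M)" for b
  have "(\<integral>\<^sup>+ \<omega>. G (B \<omega>, Z \<omega>) \<partial>M)
       = (\<integral>\<^sup>+ w. G w \<partial>distr M (count_space UNIV \<Otimes>\<^sub>M N) (\<lambda>x. (B x, Z x)))"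
    using Bm Zm Gm by (subst nn_integral_distr) auto
  also have "\<dots> = (\<integral>\<^sup>+ w. G w \<partial>(distr M (count_space UNIV) B \<Otimes>\<^sub>M distr M N Z))"
    by (simp add: eq)
  also have "\<dots> = (\<integral>\<^sup>+ b. (\<integral>\<^sup>+ z. G (b, z) \<partial>distr M N Z) \<partial>distr M (count_space UNIV) B)"
  proof -
    have "G \<in> borel_measurable (distr M (count_space UNIV) B \<Otimes>\<^sub>M distr M N Z)"
      using Gm by (simp cong: measurable_cong_sets add: sets_pair_measure_cong)
    then show ?thesis by (simp add: PZ.nn_integral_fst)
  qed
  also have "\<dots> = (\<integral>\<^sup>+ b. F b \<partial>distr M (count_space UNIV) B)"
    unfolding F_def
    apply (intro nn_integral_cong)
    apply (subst nn_integral_distr)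
    using Zm Gm by auto
  also have "\<dots> = (\<integral>\<^sup>+ \<omega>. F (B \<omega>) \<partial>M)"
    using Bm by (subst nn_integral_distr) auto
  also have "\<dots> = (\<integral>\<^sup>+ \<omega>. F True * indicator {\<omega>\<in>space M. B \<omega>} \<omega>
                   + F False * indicator {\<omega>\<in>space M. \<not> B \<omega>} \<omega> \<partial>M)"
    by (intro nn_integral_cong) (auto simp: indicator_def)
  also have "\<dots> = F True * emeasure M {\<omega>\<in>space M. B \<omega>} + F False * emeasure M {\<omega>\<in>space M. \<not> B \<omega>}"
  proof -
    have s1: "{\<omega>\<in>space M. B \<omega>} \<in> sets M" using Bm by measurable
    have s2: "{\<omega>\<in>space M. \<not> B \<omega>} \<in> sets M" using Bm by measurable
    show ?thesis using s1 s2
      by (subst nn_integral_add) (auto simp: nn_integral_cmult_indicator)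
  qed
  also have "emeasure M {\<omega>\<in>space M. B \<omega>} = ennreal (1/2)"
    using half emeasure_eq_measure by (simp only:)
  also have "emeasure M {\<omega>\<in>space M. \<not> B \<omega>} = ennreal (1/2)"
  proof -
    have s1: "{\<omega>\<in>space M. B \<omega>} \<in> sets M" using Bm by measurable
    have "{\<omega>\<in>space M. \<not> B \<omega>} = space M - {\<omega>\<in>space M. B \<omega>}" by auto
    then have "measure M {\<omega>\<in>space M. \<not> B \<omega>} = 1 - 1/2"
      using prob_compl[OF s1] half by simp
    then have "measure M {\<omega>\<in>space M. \<not> B \<omega>} = 1/2" by simp
    then show ?thesis using emeasure_eq_measure by (simp only:)
  qed
  finally show ?thesis unfolding F_def by (simp add: mult.commute)
qed


theorem lemma3:
  fixes M :: "'a measure"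
    and Xs :: "'d::euclidean_space set"
    and X :: "'a \<Rightarrow> 'd" and T :: "'a \<Rightarrow> nat" and Y0 Y1 :: "'a \<Rightarrow> real"
    and B :: "'a \<Rightarrow> bool"
    and h :: "'d \<times> nat \<Rightarrow> real"
  assumes "prob_space M"
    and "Xs \<in> sets borel"
    and "X \<in> M \<rightarrow>\<^sub>M restrict_space borel Xs"
    and "T \<in> M \<rightarrow>\<^sub>M count_space {0,1}"
    and "Y0 \<in> borel_measurable M" and "Y1 \<in> borel_measurable M"
    and "B \<in> M \<rightarrow>\<^sub>M count_space UNIV"
    and "prob_space.indep_set M
           {B -` A \<inter> space M | A. A \<in> sets (count_space UNIV)}
           {(\<lambda>\<omega>. (X \<omega>, T \<omega>, Y0 \<omega>, Y1 \<omega>)) -` A \<inter> space M | A.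
              A \<in> sets (restrict_space borel Xs \<Otimes>\<^sub>M count_space {0,1} \<Otimes>\<^sub>M (borel \<Otimes>\<^sub>M borel))}"
    and "measure M {\<omega> \<in> space M. B \<omega>} = 1/2"
    and "h \<in> borel_measurable (restrict_space borel Xs \<Otimes>\<^sub>M count_space {0,1})"
  defines "S \<equiv> (\<lambda>\<omega>. if B \<omega> then T \<omega> else 1 - T \<omega>)"
  shows "sq_loss (triple_law M Xs X S (po Y0 Y1 S)) h
       = sq_loss (triple_law M Xs X (\<lambda>\<omega>. 1 - S \<omega>) (po Y0 Y1 (\<lambda>\<omega>. 1 - S \<omega>))) h"
proof -
  note P = assms(1)
  note Xm[measurable] = assms(3)
  note Tm[measurable] = assms(4)
  note Y0m[measurable] = assms(5)
  note Y1m[measurable] = assms(6)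
  note Bm[measurable] = assms(7)
  note hm[measurable] = assms(10)
  define N where "N = restrict_space borel Xs \<Otimes>\<^sub>M count_space {0::nat,1} \<Otimes>\<^sub>M ((borel::real measure) \<Otimes>\<^sub>M (borel::real measure))"
  define Z where "Z = (\<lambda>\<omega>. (X \<omega>, T \<omega>, Y0 \<omega>, Y1 \<omega>))"
  have Zm[measurable]: "Z \<in> M \<rightarrow>\<^sub>M N" unfolding Z_def N_def by measurable
  have Tsp: "T \<omega> \<in> {0,1}" if "\<omega> \<in> space M" for \<omega>
    using measurable_space[OF Tm that] by simp
  define Gt where "Gt = (\<lambda>t (z::'d \<times> nat \<times> real \<times> real).
     if t = (0::nat) then ennreal ((fst (snd (snd z)) - h (fst z, 0))\<^sup>2)
     else ennreal ((snd (snd (snd z)) - h (fst z, 1))\<^sup>2))"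
  define G where "G = (\<lambda>w::bool \<times> ('d \<times> nat \<times> real \<times> real).
     Gt (if fst w then fst (snd (snd w)) else 1 - fst (snd (snd w))) (snd w))"
  define G' where "G' = (\<lambda>w::bool \<times> ('d \<times> nat \<times> real \<times> real). G (\<not> fst w, snd w))"
  have Gm: "G \<in> borel_measurable (count_space UNIV \<Otimes>\<^sub>M N)"
  proof -
    let ?W = "count_space (UNIV::bool set) \<Otimes>\<^sub>M N"
    have tm: "(\<lambda>w::bool \<times> ('d \<times> nat \<times> real \<times> real). fst (snd (snd w))) \<in> ?W \<rightarrow>\<^sub>M count_space {0,1}"
      unfolding N_def by measurable
    have s1: "{w \<in> space ?W. fst w} \<in> sets ?W"
    proof -
      have "fst -` {True} \<inter> space ?W \<in> sets ?W"
        by (rule measurable_sets[OF measurable_fst]) auto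
      moreover have "fst -` {True} \<inter> space ?W = {w \<in> space ?W. fst w}" by auto
      ultimately show ?thesis by simp
    qed
    have s2: "{w \<in> space ?W. fst (snd (snd w)) = 0} \<in> sets ?W"
    proof -
      have "(\<lambda>w. fst (snd (snd w))) -` {0} \<inter> space ?W \<in> sets ?W"
        using measurable_sets[OF tm, of "{0}"] by simp
      moreover have "(\<lambda>w. fst (snd (snd w))) -` {0} \<inter> space ?W = {w \<in> space ?W. fst (snd (snd w)) = 0}" by auto
      ultimately show ?thesis by simp
    qed
    have s3: "{w \<in> space ?W. 1 - fst (snd (snd w)) = 0} \<in> sets ?W"
    proof -
      have "(\<lambda>w. fst (snd (snd w))) -` {1} \<inter> space ?W \<in> sets ?W"
        using measurable_sets[OF tm, of "{1}"] by simp
      moreover have "(\<lambda>w. fst (snd (snd w))) -` {1} \<inter> space ?W = {w \<in> space ?W. 1 - fst (snd (snd w)) = 0}"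
        using measurable_space[OF tm] by (auto simp: Pi_iff) fastforce
      ultimately show ?thesis by simp
    qed
    have Am: "(\<lambda>w::bool \<times> ('d \<times> nat \<times> real \<times> real). ennreal ((fst (snd (snd (snd w))) - h (fst (snd w), 0))\<^sup>2)) \<in> borel_measurable ?W"
      unfolding N_def by measurable
    have Cm: "(\<lambda>w::bool \<times> ('d \<times> nat \<times> real \<times> real). ennreal ((snd (snd (snd (snd w))) - h (fst (snd w), 1))\<^sup>2)) \<in> borel_measurable ?W"
      unfolding N_def by measurable
    have "G = (\<lambda>w. if fst w then (if fst (snd (snd w)) = 0 then ennreal ((fst (snd (snd (snd w))) - h (fst (snd w), 0))\<^sup>2) else ennreal ((snd (snd (snd (snd w))) - h (fst (snd w), 1))\<^sup>2))
         else (if 1 - fst (snd (snd w)) = 0 then ennreal ((fst (snd (snd (snd w))) - h (fst (snd w), 0))\<^sup>2) else ennreal ((snd (snd (snd (snd w))) - h (fst (snd w), 1))\<^sup>2)))"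
      unfolding G_def Gt_def by (auto simp: fun_eq_iff)
    then show ?thesis
      using s1 s2 s3 Am Cm by (auto intro!: measurable_If)
  qed
  have G'm: "G' \<in> borel_measurable (count_space UNIV \<Otimes>\<^sub>M N)"
    unfolding G'_def using Gm by measurable
  have ind: "prob_space.indep_set M
           {B -` A \<inter> space M | A. A \<in> sets (count_space UNIV)}
           {Z -` A \<inter> space M | A. A \<in> sets N}"
    using assms(8) unfolding Z_def N_def .
  note K1 = key[OF P Bm Zm ind assms(9) Gm]
  note K2 = key[OF P Bm Zm ind assms(9) G'm]
  have cm: "(\<lambda>t::nat. 1 - t) \<in> count_space {0,1} \<rightarrow>\<^sub>M count_space {0,1}" by auto
  have Bset: "{\<omega> \<in> space M. B \<omega>} \<in> sets M"
  proof -
    have "B -` {True} \<inter> space M \<in> sets M" using measurable_sets[OF Bm, of "{True}"] by simp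
    moreover have "B -` {True} \<inter> space M = {\<omega> \<in> space M. B \<omega>}" by auto
    ultimately show ?thesis by simp
  qed
  have Sm0: "S \<in> M \<rightarrow>\<^sub>M count_space {0,1}" unfolding S_def
    by (rule measurable_If[OF Tm measurable_compose[OF Tm cm] Bset])
  have Sm1: "(\<lambda>\<omega>. 1 - S \<omega>) \<in> M \<rightarrow>\<^sub>M count_space {0,1}"
    by (rule measurable_compose[OF Sm0 cm])
  have L: "sq_loss (triple_law M Xs X S (po Y0 Y1 S)) h = (\<integral>\<^sup>+ \<omega>. G (B \<omega>, Z \<omega>) \<partial>M)"
  proof -
    note Sm = Sm0
    have Pm: "po Y0 Y1 S \<in> borel_measurable M" unfolding po_def using Sm by measurable
    have fm: "(\<lambda>z. ennreal ((snd (snd z) - h (fst z, fst (snd z)))\<^sup>2)) \<in> borel_measurable (triple_space Xs)"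
      unfolding triple_space_def by measurable
    have mm: "(\<lambda>\<omega>. (X \<omega>, S \<omega>, po Y0 Y1 S \<omega>)) \<in> M \<rightarrow>\<^sub>M triple_space Xs"
      unfolding triple_space_def using Sm Pm by measurable
    show ?thesis
      unfolding sq_loss_def triple_law_def
      apply (subst nn_integral_distr[OF mm]) using fm apply simp
      apply (intro nn_integral_cong)
      subgoal for \<omega> using Tsp[of \<omega>] unfolding G_def Gt_def Z_def S_def po_def
        by (cases "T \<omega> = 0") auto
      done
  qed
  have R: "sq_loss (triple_law M Xs X (\<lambda>\<omega>. 1 - S \<omega>) (po Y0 Y1 (\<lambda>\<omega>. 1 - S \<omega>))) h
       = (\<integral>\<^sup>+ \<omega>. G' (B \<omega>, Z \<omega>) \<partial>M)"
  proof -
    note Sm = Sm1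
    have Pm: "po Y0 Y1 (\<lambda>\<omega>. 1 - S \<omega>) \<in> borel_measurable M" unfolding po_def using Sm by measurable
    have fm: "(\<lambda>z. ennreal ((snd (snd z) - h (fst z, fst (snd z)))\<^sup>2)) \<in> borel_measurable (triple_space Xs)"
      unfolding triple_space_def by measurable
    have mm: "(\<lambda>\<omega>. (X \<omega>, 1 - S \<omega>, po Y0 Y1 (\<lambda>\<omega>. 1 - S \<omega>) \<omega>)) \<in> M \<rightarrow>\<^sub>M triple_space Xs"
      unfolding triple_space_def using Sm Pm by measurable
    show ?thesis
      unfolding sq_loss_def triple_law_def
      apply (subst nn_integral_distr[OF mm]) using fm apply simp
      apply (intro nn_integral_cong)
      subgoal for \<omega> using Tsp[of \<omega>] unfolding G'_def G_def Gt_def Z_def S_def po_def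
        by (cases "T \<omega> = 0") auto
      done
  qed
  show ?thesis unfolding L R K1 K2 by (simp add: G'_def add.commute)
qed

end
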